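(* Let $d\ge 2$ be an integer and let $a_1,\dots,a_d,b_1,\dots,b_d$ be positive real numbers. Then there is a unique pair $(\lambda,f)=(\lambda,f_1,\dots,f_d)\in\mathbb{R}\times C^2([0,1];(0,\infty)^d)$ such that $$\sum_{i=1}^d\left(-\frac{f_i'}{f_i}\sum_{k=1}^d\frac{f_k'}{f_k}+\frac{f_i'^2}{f_i^2}\right)\Bigg|_{r=0}=(d-1)\lambda,$$ $$-\frac{f_i'}{f_i}\sum_{k=1}^d\frac{f_k'}{f_k}+\frac{f_i'^2}{f_i^2}-\frac{f_i''}{f_i}=\lambda\quad\text{on }[0,1],\ i=1,\dots,d,$$ and $f_i(0)=a_i$, $f_i(1)=b_i$ for each $i=1,\dots,d$.
   Context: These are the Einstein equations for a metric $dr\otimes dr+\sum_i f_i(r)^2\,dx_i^2$ on $\mathbb{T}^d\times[0,1]$ with Einstein constant $\lambda$; primes denote derivatives in $r\in[0,1]$. *)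

theory Defs
  imports "HOL-Analysis.Analysis"
begin

text \<open>The index set {1..d} is a finite type 'n with d = CARD('n).
  f1 i and f2 i are the first and second derivatives of f i on [0,1]
  (one-sided at the endpoints, i.e. within [0,1]); f2 i continuous on [0,1]
  makes f i a C^2 function on [0,1].\<close>

definition C2_with_derivs ::
  "(real \<Rightarrow> real) \<Rightarrow> (real \<Rightarrow> real) \<Rightarrow> (real \<Rightarrow> real) \<Rightarrow> bool" where
  "C2_with_derivs g g1 g2 \<longleftrightarrow>
     (\<forall>r\<in>{0..1}. (g has_real_derivative g1 r) (at r within {0..1}) \<and>
                  (g1 has_real_derivative g2 r) (at r within {0..1})) \<and>
     continuous_on {0..1} g2"

definition einstein_sol ::
  "('n::finite \<Rightarrow> real) \<Rightarrow> ('n \<Rightarrow> real) \<Rightarrow> real \<Rightarrow> ('n \<Rightarrow> real \<Rightarrow> real) \<Rightarrow> bool" where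
  "einstein_sol a b lam f \<longleftrightarrow>
     (\<exists>f1 f2.
        (\<forall>i. C2_with_derivs (f i) (f1 i) (f2 i)) \<and>
        (\<forall>i. \<forall>r\<in>{0..1}. f i r > 0) \<and>
        (\<Sum>i\<in>UNIV. - (f1 i 0 / f i 0) * (\<Sum>k\<in>UNIV. f1 k 0 / f k 0) + (f1 i 0 / f i 0)^2)
           = (real CARD('n) - 1) * lam \<and>
        (\<forall>i. \<forall>r\<in>{0..1}.
           - (f1 i r / f i r) * (\<Sum>k\<in>UNIV. f1 k r / f k r) + (f1 i r / f i r)^2
           - f2 i r / f i r = lam) \<and>
        (\<forall>i. f i 0 = a i \<and> f i 1 = b i))"

end

theory Submission imports Defs begin

definition Sk :: "real \<Rightarrow> real \<Rightarrow> real" where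
  "Sk k x = (if k = 0 then x else sinh (k*x) / k)"

lemma Sk_deriv: "(Sk k has_real_derivative cosh (k*x)) (at x within s)"
proof (cases "k = 0")
  case True
  then show ?thesis unfolding Sk_def by (auto intro!: derivative_eq_intros)
next
  case False
  have "((\<lambda>x. sinh (k*x) / k) has_real_derivative cosh (k*x)) (at x within s)"
    by (rule derivative_eq_intros refl | use False in simp)+
  then show ?thesis using False unfolding Sk_def by simp
qed

lemma cosh_deriv: "((\<lambda>x. cosh (k*x)) has_real_derivative k^2 * Sk k x) (at x within s)"
proof -
  have "((\<lambda>x. cosh (k*x)) has_real_derivative sinh (k*x) * (k*1)) (at x within s)"
    by (rule derivative_eq_intros refl)+ simp
  moreover have "sinh (k*x) * (k*1) = k^2 * Sk k x"
    by (cases "k=0") (auto simp: Sk_def power2_eq_square)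
  ultimately show ?thesis by simp
qed

lemma Sk_0[simp]: "Sk k 0 = 0" by (simp add: Sk_def)

lemma Sk_pos: assumes "k \<ge> 0" "x > 0" shows "Sk k x > 0"
  using assms by (auto simp: Sk_def)

lemma Sk_nonneg: assumes "k \<ge> 0" "x \<ge> 0" shows "Sk k x \<ge> 0"
  using assms by (auto simp: Sk_def)

lemma cosh_Sk: "(cosh (k*x))^2 - k^2 * (Sk k x)^2 = 1"
proof (cases "k=0")
  case False
  have "(cosh (k*x))^2 - (sinh (k*x))^2 = 1" by (simp add: cosh_square_eq)
  then show ?thesis using False by (simp add: Sk_def power_divide)
qed (simp add: Sk_def)

lemma Sk_diff: "cosh (k*x) * Sk k 1 - cosh k * Sk k x = Sk k (1 - x)"
proof (cases "k=0")
  case False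
  have "sinh (k - k*x) = sinh k * cosh (k*x) - cosh k * sinh (k*x)" by (simp add: sinh_diff)
  then show ?thesis using False by (simp add: Sk_def field_simps right_diff_distrib)
qed (simp add: Sk_def)

definition Psi :: "real \<Rightarrow> real \<Rightarrow> real \<Rightarrow> real \<Rightarrow> real" where
  "Psi k al be x = al * cosh (k*x) + be * Sk k x"
definition Psi1 :: "real \<Rightarrow> real \<Rightarrow> real \<Rightarrow> real \<Rightarrow> real" where
  "Psi1 k al be x = al * k^2 * Sk k x + be * cosh (k*x)"

lemma Psi_deriv: "(Psi k al be has_real_derivative Psi1 k al be x) (at x within s)"
proof -
  have "((\<lambda>x. al * cosh (k*x) + be * Sk k x) has_real_derivative al * (k^2 * Sk k x) + be * cosh (k*x)) (at x within s)"
    by (intro DERIV_add DERIV_cmult cosh_deriv Sk_deriv)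
  then show ?thesis unfolding Psi_def Psi1_def by (simp add: fun_eq_iff algebra_simps)
qed

lemma Psi1_deriv: "(Psi1 k al be has_real_derivative k^2 * Psi k al be x) (at x within s)"
proof -
  have "((\<lambda>x. al * k^2 * Sk k x + be * cosh (k*x)) has_real_derivative al * k^2 * cosh (k*x) + be * (k^2 * Sk k x)) (at x within s)"
    by (intro DERIV_add DERIV_cmult cosh_deriv Sk_deriv)
  then show ?thesis unfolding Psi_def Psi1_def by (simp add: fun_eq_iff algebra_simps)
qed

lemma Psi_energy: "k^2 * (Psi k al be x)^2 - (Psi1 k al be x)^2 = k^2*al^2 - be^2"
proof -
  have "k^2 * (Psi k al be x)^2 - (Psi1 k al be x)^2 = (k^2*al^2 - be^2) * ((cosh (k*x))^2 - k^2 * (Sk k x)^2)"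
    unfolding Psi_def Psi1_def by (simp add: power2_eq_square algebra_simps)
  then show ?thesis using cosh_Sk[of k x] by simp
qed

lemma Psi_0[simp]: "Psi k al be 0 = al" "Psi1 k al be 0 = be"
  by (simp_all add: Psi_def Psi1_def)

lemma Psi_cont[continuous_intros]: "continuous_on s (Psi k al be)"
  by (rule DERIV_continuous_on[OF Psi_deriv])
lemma Psi1_cont[continuous_intros]: "continuous_on s (Psi1 k al be)"
  by (rule DERIV_continuous_on[OF Psi1_deriv])

lemma incr01:
  fixes f D :: "real \<Rightarrow> real"
  assumes der: "\<And>x. x \<in> {0..1} \<Longrightarrow> (f has_real_derivative D x) (at x within {0..1})"
    and pos: "\<And>x. x \<in> {0..1} \<Longrightarrow> D x > 0"
    and xy: "0 \<le> x" "x < y" "y \<le> 1"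
  shows "f x < f y"
proof (rule DERIV_pos_imp_increasing_open[OF xy(2)])
  fix z assume z: "x < z" "z < y"
  then have "at z within {0..1} = at z" using xy by (intro at_within_Icc_at) auto
  then have "DERIV f z :> D z" using der[of z] z xy by auto
  then show "\<exists>y. DERIV f z :> y \<and> y > 0" using pos[of z] z xy by auto
next
  have "continuous_on {0..1} f" by (rule DERIV_continuous_on[OF der])
  then show "continuous_on {x..y} f" by (rule continuous_on_subset) (use xy in auto)
qed

locale psi_setup =
  fixes k al be :: real
  assumes pos: "\<And>\<tau>. \<tau> \<in> {0..1} \<Longrightarrow> Psi k al be \<tau> > 0"
begin

definition I where "I \<tau> = integral {0..\<tau>} (\<lambda>s. 1 / Psi k al be s)"
definition c where "c = I 1"
definition t where "t r = (SOME \<tau>. \<tau> \<in> {0..1} \<and> I \<tau> = c * r)"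

lemma inv_cont: "continuous_on {0..1} (\<lambda>s. 1 / Psi k al be s)"
  by (rule continuous_on_divide[OF continuous_on_const Psi_cont]) (use pos in force)

lemma I_deriv: "\<tau> \<in> {0..1} \<Longrightarrow> (I has_real_derivative 1 / Psi k al be \<tau>) (at \<tau> within {0..1})"
  unfolding I_def[abs_def] by (rule integral_has_real_derivative[OF inv_cont])

lemma I_cont: "continuous_on {0..1} I"
  by (rule DERIV_continuous_on[OF I_deriv])

lemma I_mono: "0 \<le> x \<Longrightarrow> x < y \<Longrightarrow> y \<le> 1 \<Longrightarrow> I x < I y"
  by (rule incr01[OF I_deriv]) (use pos in auto)

lemma I_0[simp]: "I 0 = 0" by (simp add: I_def)

lemma c_pos: "c > 0" using I_mono[of 0 1] by (simp add: c_def)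

lemma I_inj: "x \<in> {0..1} \<Longrightarrow> y \<in> {0..1} \<Longrightarrow> I x = I y \<Longrightarrow> x = y"
  by (metis I_mono atLeastAtMost_iff linorder_neq_iff less_irrefl)

lemma I_range: "x \<in> {0..1} \<Longrightarrow> 0 \<le> I x \<and> I x \<le> c"
  using I_mono[of 0 x] I_mono[of x 1] by (cases "x = 0"; cases "x = 1") (auto simp: c_def)

lemma t_prop: assumes "r \<in> {0..1}" shows "t r \<in> {0..1} \<and> I (t r) = c * r"
proof -
  have "\<exists>\<tau>. 0 \<le> \<tau> \<and> \<tau> \<le> 1 \<and> I \<tau> = c * r"
    by (rule IVT'[OF _ _ _ I_cont]) (use assms c_pos in \<open>auto simp: c_def\<close>)
  then have "\<exists>\<tau>. \<tau> \<in> {0..1} \<and> I \<tau> = c * r" by auto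
  then show ?thesis unfolding t_def by (rule someI_ex)
qed

lemma t_unique: "r \<in> {0..1} \<Longrightarrow> \<tau> \<in> {0..1} \<Longrightarrow> I \<tau> = c * r \<Longrightarrow> t r = \<tau>"
  using t_prop I_inj by metis

lemma t_0[simp]: "t 0 = 0" by (rule t_unique) auto
lemma t_1[simp]: "t 1 = 1" by (rule t_unique) (auto simp: c_def)

definition f0 where "f0 \<tau> = I \<tau> / c"

lemma f0_image: "f0 ` {0..1} = {0..1}"
proof
  show "f0 ` {0..1} \<subseteq> {0..1}" using I_range c_pos by (auto simp: f0_def)
  show "{0..1} \<subseteq> f0 ` {0..1}"
  proof
    fix r :: real assume r: "r \<in> {0..1}"
    then have "r = f0 (t r)" using t_prop[OF r] c_pos by (simp add: f0_def)
    then show "r \<in> f0 ` {0..1}" using t_prop[OF r] by blast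
  qed
qed

lemma t_f0: "\<tau> \<in> {0..1} \<Longrightarrow> t (f0 \<tau>) = \<tau>"
  by (rule t_unique) (use I_range c_pos in \<open>auto simp: f0_def\<close>)

lemma t_cont: "continuous_on {0..1} t"
proof -
  have "continuous_on {0..1} f0" unfolding f0_def using c_pos by (intro continuous_intros I_cont) auto
  then have "continuous_on (f0 ` {0..1}) t"
    by (rule continuous_on_inv) (auto simp: t_f0)
  then show ?thesis by (simp add: f0_image)
qed

lemma t_deriv: assumes r: "r \<in> {0..1}"
  shows "(t has_real_derivative c * Psi k al be (t r)) (at r within {0..1})"
proof -
  define \<tau> where "\<tau> = t r"
  have tau: "\<tau> \<in> {0..1}" "f0 \<tau> = r" using t_prop[OF r] c_pos by (auto simp: \<tau>_def f0_def)
  have P: "Psi k al be \<tau> > 0" using pos tau by auto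
  have "(f0 has_real_derivative (1 / Psi k al be \<tau>) / c) (at \<tau> within {0..1})"
    unfolding f0_def[abs_def] by (intro DERIV_cdivide I_deriv tau)
  then have d: "(f0 has_derivative (*) ((1 / Psi k al be \<tau>) / c)) (at \<tau> within {0..1})"
    by (simp add: has_field_derivative_def)
  have ct: "continuous (at (f0 \<tau>) within f0 ` {0..1}) t"
    using t_cont tau r by (simp add: f0_image continuous_on_eq_continuous_within)
  have "(t has_derivative (*) (c * Psi k al be \<tau>)) (at (f0 \<tau>) within f0 ` {0..1})"
    by (rule has_derivative_inverse_within[OF d ct tau(1)])
       (use P c_pos in \<open>auto simp: t_f0 linear_cmul fun_eq_iff intro: linear_times\<close>)
  then show ?thesis using tau by (simp add: has_field_derivative_def f0_image \<tau>_def mult.commute)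
qed

end


lemma alg1:
  fixes c T V0 S0 E0 \<mu> k al be :: real
  assumes "c = 1 / T" "T > 0" "V0 > 0" "al = 1 / V0" "S0 = - be * c" "E0 = V0^2 * (S0^2 + \<mu>)" "T^2 * E0 = k^2"
  shows "c^2 * (k^2 * al^2 - be^2) = \<mu>"
proof -
  have k2: "k^2 = T^2 * (V0^2 * (S0^2 + \<mu>))" using assms(6,7) by simp
  have cT: "c * T = 1" and aV: "al * V0 = 1" using assms(1-4) by auto
  have "c^2 * k^2 * al^2 = (c*T)^2 * (al*V0)^2 * (S0^2 + \<mu>)"
    unfolding k2 by (simp add: power_mult_distrib)
  also have "\<dots> = S0^2 + \<mu>" by (simp add: cT aV)
  finally have "c^2 * k^2 * al^2 = S0^2 + \<mu>" .
  moreover have "S0^2 = c^2 * be^2" using assms(5) by (simp add: power_mult_distrib)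
  ultimately show ?thesis by (simp add: algebra_simps)
qed

locale data =
  fixes a b :: "'n::finite \<Rightarrow> real"
  assumes card2: "CARD('n) \<ge> 2" and apos: "\<And>i. a i > 0" and bpos: "\<And>i. b i > 0"
begin

definition "d = real CARD('n)"
definition "L i = ln (b i) - ln (a i)"
definition "l i = L i - (\<Sum>j\<in>UNIV. L j) / d"
definition "k = sqrt (d * (\<Sum>i\<in>UNIV. (l i)^2) / (d - 1))"
definition "lnA = (\<Sum>i\<in>UNIV. ln (a i))"
definition "lnB = (\<Sum>i\<in>UNIV. ln (b i))"
definition "al = exp (- lnA)"
definition "be = (exp (- lnB) - cosh k * al) / Sk k 1"

lemma d_gt1: "d > 1" using card2 by (simp add: d_def)

lemma k_arg: "0 \<le> d * (\<Sum>i\<in>UNIV. (l i)^2) / (d - 1)" using d_gt1 by (intro divide_nonneg_pos mult_nonneg_nonneg sum_nonneg) auto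

lemma k_nonneg: "k \<ge> 0" using k_arg by (simp add: k_def)

lemma Sk1_pos: "Sk k 1 > 0" using Sk_pos[OF k_nonneg] by simp

lemma sum_l: "(\<Sum>i\<in>UNIV. l i) = 0"
  using d_gt1 by (simp add: l_def sum_subtractf d_def)

lemma sum_l2: "(\<Sum>i\<in>UNIV. (l i)^2) = (d - 1) * k^2 / d"
proof -
  have "k^2 = d * (\<Sum>i\<in>UNIV. (l i)^2) / (d - 1)" using k_arg by (simp add: k_def)
  then show ?thesis using d_gt1 by (simp add: field_simps)
qed

lemma Psi_pos: assumes "\<tau> \<in> {0..1}" shows "Psi k al be \<tau> > 0"
proof -
  have "Psi k al be \<tau> * Sk k 1 = al * Sk k (1 - \<tau>) + exp (- lnB) * Sk k \<tau>"
    using Sk_diff[of k \<tau>] Sk1_pos unfolding Psi_def be_def by (simp add: field_simps)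
  moreover have "al * Sk k (1 - \<tau>) + exp (- lnB) * Sk k \<tau> > 0"
  proof (cases "\<tau> = 1")
    case True then show ?thesis using Sk_pos[OF k_nonneg] by (simp add: al_def)
  next
    case False
    then have "Sk k (1 - \<tau>) > 0" using assms by (intro Sk_pos k_nonneg) auto
    moreover have "Sk k \<tau> \<ge> 0" using assms by (intro Sk_nonneg k_nonneg) auto
    ultimately show ?thesis by (simp add: al_def add_pos_nonneg)
  qed
  ultimately show ?thesis using Sk1_pos by (metis zero_less_mult_pos2)
qed

sublocale psi_setup k al be by unfold_locales (rule Psi_pos)


abbreviation "Ps \<equiv> Psi k al be"
abbreviation "Ps1 \<equiv> Psi1 k al be"

definition "F i \<tau> = a i * exp (l i * \<tau> - (lnA + ln (Ps \<tau>)) / d)"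
definition "P i \<tau> = l i * Ps \<tau> - Ps1 \<tau> / d"
definition "P1 i \<tau> = l i * Ps1 \<tau> - k^2 * Ps \<tau> / d"

lemma F_pos: "F i \<tau> > 0" using apos by (simp add: F_def)

lemma F_deriv: assumes "\<tau> \<in> {0..1}"
  shows "(F i has_real_derivative F i \<tau> * P i \<tau> / Ps \<tau>) (at \<tau>)"
proof -
  have p: "Ps \<tau> > 0" using Psi_pos assms by auto
  have "DERIV (\<lambda>x. ln (Ps x)) \<tau> :> 1 / Ps \<tau> * Ps1 \<tau>"
    using DERIV_chain2[OF DERIV_ln_divide[OF p] Psi_deriv] .
  then have "DERIV (\<lambda>x. l i * x - (lnA + ln (Ps x)) / d) \<tau> :> l i * 1 - (0 + 1 / Ps \<tau> * Ps1 \<tau>) / d"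
    by (intro DERIV_diff DERIV_cmult DERIV_ident DERIV_cdivide DERIV_add DERIV_const)
  then have "DERIV (\<lambda>x. a i * exp (l i * x - (lnA + ln (Ps x)) / d)) \<tau> :>
       a i * (exp (l i * \<tau> - (lnA + ln (Ps \<tau>)) / d) * (l i * 1 - (0 + 1 / Ps \<tau> * Ps1 \<tau>) / d))"
    by (intro DERIV_cmult DERIV_fun_exp)
  moreover have "a i * (exp (l i * \<tau> - (lnA + ln (Ps \<tau>)) / d) * (l i * 1 - (0 + 1 / Ps \<tau> * Ps1 \<tau>) / d))
     = F i \<tau> * P i \<tau> / Ps \<tau>"
    using p d_gt1 by (simp add: F_def P_def field_simps)
  ultimately show ?thesis by (simp add: F_def[abs_def])
qed

lemma P_deriv: "(P i has_real_derivative P1 i \<tau>) (at \<tau>)"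
proof -
  have "DERIV (\<lambda>x. l i * Ps x - Ps1 x / d) \<tau> :> l i * Ps1 \<tau> - k^2 * Ps \<tau> / d"
    by (intro DERIV_diff DERIV_cmult DERIV_cdivide Psi_deriv Psi1_deriv)
  then show ?thesis by (simp add: P_def[abs_def] P1_def)
qed

definition "fs i r = F i (t r)"
definition "fs1 i r = c * P i (t r) * F i (t r)"
definition "fs2 i r = c^2 * (P1 i (t r) * Ps (t r) + (P i (t r))^2) * F i (t r)"
definition "lam0 = c^2 * (k^2 * al^2 - be^2) / d"

lemma fs_deriv: assumes r: "r \<in> {0..1}"
  shows "(fs i has_real_derivative fs1 i r) (at r within {0..1})"
proof -
  have tr: "t r \<in> {0..1}" using t_prop[OF r] by auto
  have p: "Ps (t r) > 0" using Psi_pos tr by auto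
  have "((\<lambda>x. F i (t x)) has_real_derivative (F i (t r) * P i (t r) / Ps (t r)) * (c * Ps (t r))) (at r within {0..1})"
    by (rule DERIV_chain2[OF F_deriv[OF tr] t_deriv[OF r]])
  then show ?thesis using p by (simp add: fs_def[abs_def] fs1_def field_simps)
qed

lemma fs1_deriv: assumes r: "r \<in> {0..1}"
  shows "(fs1 i has_real_derivative fs2 i r) (at r within {0..1})"
proof -
  have tr: "t r \<in> {0..1}" using t_prop[OF r] by auto
  have p: "Ps (t r) > 0" using Psi_pos tr by auto
  have "DERIV (\<lambda>x. c * P i x * F i x) (t r) :> c * P1 i (t r) * F i (t r) + (F i (t r) * P i (t r) / Ps (t r)) * (c * P i (t r))"
    by (rule DERIV_mult[OF DERIV_cmult[OF P_deriv] F_deriv[OF tr]])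
  note D = DERIV_chain2[OF this t_deriv[OF r]]
  have eq: "(c * P1 i (t r) * F i (t r) + (F i (t r) * P i (t r) / Ps (t r)) * (c * P i (t r))) * (c * Ps (t r)) = fs2 i r"
    using p by (simp add: fs2_def field_simps power2_eq_square)
  have "fs1 i = (\<lambda>x. c * P i (t x) * F i (t x))" by (simp add: fs1_def fun_eq_iff)
  then show ?thesis using D unfolding eq by simp
qed

lemma F_cont: "continuous_on {0..1} (F i)"
  by (rule DERIV_continuous_on, rule has_field_derivative_at_within, rule F_deriv)

lemma fs2_cont: "continuous_on {0..1} (fs2 i)"
proof -
  have "continuous_on {0..1} (\<lambda>\<tau>. c^2 * (P1 i \<tau> * Ps \<tau> + (P i \<tau>)^2) * F i \<tau>)"
    unfolding P1_def P_def using d_gt1 by (intro continuous_intros F_cont) auto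
  then have "continuous_on {0..1} ((\<lambda>\<tau>. c^2 * (P1 i \<tau> * Ps \<tau> + (P i \<tau>)^2) * F i \<tau>) \<circ> t)"
    by (rule continuous_on_compose[OF t_cont continuous_on_subset]) (use t_prop in auto)
  then show ?thesis by (simp add: fs2_def[abs_def] o_def)
qed

lemma sumP: "(\<Sum>i\<in>UNIV. P i \<tau>) = - Ps1 \<tau>"
proof -
  have "(\<Sum>i\<in>UNIV. P i \<tau>) = Ps \<tau> * (\<Sum>i\<in>UNIV. l i) - d * (Ps1 \<tau> / d)"
    by (simp add: P_def sum_subtractf sum_distrib_right d_def mult.commute)
  then show ?thesis using sum_l d_gt1 by simp
qed

lemma sumP2: "(\<Sum>i\<in>UNIV. (P i \<tau>)^2) = (Ps \<tau>)^2 * (\<Sum>i\<in>UNIV. (l i)^2) + (Ps1 \<tau>)^2 / d"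
proof -
  have "(\<Sum>i\<in>UNIV. (P i \<tau>)^2) = (\<Sum>i\<in>UNIV. (Ps \<tau>)^2 * (l i)^2 - (2 * Ps \<tau> * Ps1 \<tau> / d) * l i + (Ps1 \<tau>)^2 / d^2)"
    using d_gt1 by (intro sum.cong) (auto simp: P_def power2_eq_square field_simps)
  also have "\<dots> = (Ps \<tau>)^2 * (\<Sum>i\<in>UNIV. (l i)^2) - (2 * Ps \<tau> * Ps1 \<tau> / d) * (\<Sum>i\<in>UNIV. l i) + d * ((Ps1 \<tau>)^2 / d^2)"
    by (simp add: sum.distrib sum_subtractf sum_distrib_left d_def)
  finally show ?thesis using sum_l d_gt1 by (simp add: power2_eq_square)
qed

lemma existence: "einstein_sol a b lam0 fs"
  unfolding einstein_sol_def
proof (intro exI conjI allI ballI)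
  fix i
  show "C2_with_derivs (fs i) (fs1 i) (fs2 i)"
    unfolding C2_with_derivs_def using fs_deriv fs1_deriv fs2_cont by blast
next
  fix i and r :: real show "fs i r > 0" by (simp add: fs_def F_pos)
next
  fix i show "fs i 0 = a i" unfolding fs_def t_0 by (simp add: F_def al_def)
next
  fix i
  have "Ps 1 = exp (- lnB)" using Sk1_pos by (simp add: Psi_def be_def)
  moreover have "(\<Sum>j\<in>UNIV. L j) = lnB - lnA" by (simp add: L_def lnA_def lnB_def sum_subtractf)
  ultimately have "l i * 1 - (lnA + ln (Ps 1)) / d = ln (b i) - ln (a i)"
    using d_gt1 by (simp add: l_def L_def field_simps lnA_def lnB_def sum_subtractf)
  then show "fs i 1 = b i" using apos[of i] bpos[of i] by (simp add: fs_def F_def exp_diff)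
next
  fix i and r :: real assume r: "r \<in> {0..1}"
  define \<tau> where "\<tau> = t r"
  have q: "\<And>j. fs1 j r / fs j r = c * P j \<tau>" "fs2 i r / fs i r = c^2 * (P1 i \<tau> * Ps \<tau> + (P i \<tau>)^2)"
    using F_pos by (simp_all add: fs_def fs1_def fs2_def \<tau>_def less_imp_neq[symmetric])
  have S: "(\<Sum>j\<in>UNIV. fs1 j r / fs j r) = - c * Ps1 \<tau>"
    by (simp add: q sumP flip: sum_distrib_left)
  have "- (fs1 i r / fs i r) * (\<Sum>j\<in>UNIV. fs1 j r / fs j r) + (fs1 i r / fs i r)^2 - fs2 i r / fs i r
     = c^2 * (k^2 * (Ps \<tau>)^2 - (Ps1 \<tau>)^2) / d"
    unfolding S using d_gt1 by (simp add: q P_def P1_def field_simps power2_eq_square)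
  then show "- (fs1 i r / fs i r) * (\<Sum>j\<in>UNIV. fs1 j r / fs j r) + (fs1 i r / fs i r)^2 - fs2 i r / fs i r = lam0"
    by (simp add: Psi_energy lam0_def)
next
  have q: "\<And>j. fs1 j 0 / fs j 0 = c * P j 0"
    using F_pos by (simp_all add: fs_def fs1_def less_imp_neq[symmetric])
  have S: "(\<Sum>j\<in>UNIV. fs1 j 0 / fs j 0) = - c * Ps1 0"
    by (simp add: q sumP flip: sum_distrib_left)
  have "(\<Sum>i\<in>UNIV. - (fs1 i 0 / fs i 0) * (\<Sum>k\<in>UNIV. fs1 k 0 / fs k 0) + (fs1 i 0 / fs i 0)^2)
     = (\<Sum>i\<in>UNIV. c^2 * Ps1 0 * P i 0 + c^2 * (P i 0)^2)"
    unfolding S by (rule sum.cong) (auto simp: q power2_eq_square)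
  also have "\<dots> = c^2 * Ps1 0 * (\<Sum>i\<in>UNIV. P i 0) + c^2 * (\<Sum>i\<in>UNIV. (P i 0)^2)"
    by (simp add: sum.distrib sum_distrib_left)
  also have "\<dots> = (d - 1) * (c^2 * (k^2 * (Ps 0)^2 - (Ps1 0)^2) / d)"
    unfolding sumP sumP2 sum_l2 using d_gt1 by (simp add: field_simps power2_eq_square)
  finally show "(\<Sum>i\<in>UNIV. - (fs1 i 0 / fs i 0) * (\<Sum>k\<in>UNIV. fs1 k 0 / fs k 0) + (fs1 i 0 / fs i 0)^2)
     = (real CARD('n) - 1) * lam0"
    by (simp add: Psi_energy lam0_def d_def)
qed


lemma uniqueness:
  assumes sol: "einstein_sol a b lam' g"
  shows "lam' = lam0 \<and> (\<forall>i. \<forall>r\<in>{0..1}. g i r = fs i r)"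
proof -
  define J :: "real set" where "J = {0..1}"
  have cJ: "convex J" by (simp add: J_def)
  obtain g1 g2 where C2: "\<And>i. C2_with_derivs (g i) (g1 i) (g2 i)"
    and gpos: "\<And>i r. r \<in> J \<Longrightarrow> g i r > 0"
    and cons0: "(\<Sum>i\<in>UNIV. - (g1 i 0 / g i 0) * (\<Sum>k\<in>UNIV. g1 k 0 / g k 0) + (g1 i 0 / g i 0)^2)
           = (real CARD('n) - 1) * lam'"
    and eq: "\<And>i r. r \<in> J \<Longrightarrow> - (g1 i r / g i r) * (\<Sum>k\<in>UNIV. g1 k r / g k r) + (g1 i r / g i r)^2
           - g2 i r / g i r = lam'"
    and bd: "\<And>i. g i 0 = a i \<and> g i 1 = b i"
    using sol unfolding einstein_sol_def J_def by blast
  have dg: "\<And>i r. r \<in> J \<Longrightarrow> (g i has_real_derivative g1 i r) (at r within J)"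
   and dg1: "\<And>i r. r \<in> J \<Longrightarrow> (g1 i has_real_derivative g2 i r) (at r within J)"
    using C2 unfolding C2_with_derivs_def J_def by blast+
  define p where "p i r = g1 i r / g i r" for i r
  define S where "S r = (\<Sum>i\<in>UNIV. p i r)" for r
  define LV where "LV r = (\<Sum>i\<in>UNIV. ln (g i r))" for r
  define V where "V r = exp (LV r)" for r
  define \<mu> where "\<mu> = d * lam'"
  have Vpos: "\<And>r. V r > 0" by (simp add: V_def)
  have dlog: "\<And>i r. r \<in> J \<Longrightarrow> ((\<lambda>r. ln (g i r)) has_real_derivative p i r) (at r within J)"
  proof -
    fix i r assume r: "r \<in> J"
    show "((\<lambda>r. ln (g i r)) has_real_derivative p i r) (at r within J)"
      using DERIV_chain2[OF DERIV_ln_divide[OF gpos[OF r]] dg[OF r]] by (simp add: p_def)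
  qed
  have dp: "\<And>i r. r \<in> J \<Longrightarrow> (p i has_real_derivative - lam' - p i r * S r) (at r within J)"
  proof -
    fix i r assume r: "r \<in> J"
    have gz: "g i r \<noteq> 0" using gpos[of r i] r by simp
    have "((\<lambda>r. g1 i r / g i r) has_real_derivative (g2 i r * g i r - g1 i r * g1 i r) / (g i r * g i r)) (at r within J)"
      by (rule DERIV_divide[OF dg1[OF r] dg[OF r] gz])
    moreover have "(g2 i r * g i r - g1 i r * g1 i r) / (g i r * g i r) = - lam' - p i r * S r"
    proof -
      have "(g2 i r * g i r - g1 i r * g1 i r) / (g i r * g i r) = g2 i r / g i r - (p i r)^2"
        using gz by (simp add: p_def field_simps power2_eq_square)
      then show ?thesis using eq[OF r, of i] by (simp add: p_def S_def algebra_simps)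
    qed
    ultimately show "(p i has_real_derivative - lam' - p i r * S r) (at r within J)"
      by (simp add: p_def[abs_def])
  qed
  have dS: "\<And>r. r \<in> J \<Longrightarrow> (S has_real_derivative - \<mu> - (S r)^2) (at r within J)"
  proof -
    fix r assume r: "r \<in> J"
    have "((\<lambda>r. \<Sum>i\<in>UNIV. p i r) has_real_derivative (\<Sum>i\<in>UNIV. - lam' - p i r * S r)) (at r within J)"
      by (rule DERIV_sum) (rule dp[OF r])
    moreover have "(\<Sum>i\<in>UNIV. - lam' - p i r * S r) = - \<mu> - (S r)^2"
      by (simp add: sum_subtractf \<mu>_def d_def S_def power2_eq_square sum_distrib_right)
    ultimately show "(S has_real_derivative - \<mu> - (S r)^2) (at r within J)"
      by (simp add: S_def[abs_def])
  qed
  have dV: "\<And>r. r \<in> J \<Longrightarrow> (V has_real_derivative V r * S r) (at r within J)"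
  proof -
    fix r assume r: "r \<in> J"
    have "(LV has_real_derivative S r) (at r within J)"
      unfolding LV_def[abs_def] S_def by (rule DERIV_sum) (rule dlog[OF r])
    from DERIV_chain2[OF DERIV_exp this] show "(V has_real_derivative V r * S r) (at r within J)"
      by (simp add: V_def[abs_def])
  qed
  define E where "E r = (V r)^2 * ((S r)^2 + \<mu>)" for r
  have dE: "\<And>r. r \<in> J \<Longrightarrow> (E has_real_derivative 0) (at r within J)"
  proof -
    fix r assume r: "r \<in> J"
    have "((\<lambda>r. (V r * V r) * (S r * S r + \<mu>)) has_real_derivative 0) (at r within J)"
      by (rule DERIV_cong[OF DERIV_mult[OF DERIV_mult[OF dV[OF r] dV[OF r]] DERIV_add[OF DERIV_mult[OF dS[OF r] dS[OF r]] DERIV_const]]])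
         (simp add: algebra_simps power2_eq_square)
    then show "(E has_real_derivative 0) (at r within J)"
      by (simp add: E_def[abs_def] power2_eq_square)
  qed
  obtain E0 where E0: "\<And>r. r \<in> J \<Longrightarrow> E r = E0"
    using has_field_derivative_zero_constant[OF cJ dE] by blast
  define e where "e i r = V r * (p i r - S r / d)" for i r
  have de: "\<And>i r. r \<in> J \<Longrightarrow> (e i has_real_derivative 0) (at r within J)"
  proof -
    fix i r assume r: "r \<in> J"
    have "((\<lambda>r. V r * (p i r - S r / d)) has_real_derivative 0) (at r within J)"
      by (rule DERIV_cong[OF DERIV_mult[OF dV[OF r] DERIV_diff[OF dp[OF r] DERIV_cdivide[OF dS[OF r]]]]])
         (use d_gt1 in \<open>simp add: \<mu>_def field_simps power2_eq_square\<close>)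
    then show "(e i has_real_derivative 0) (at r within J)"
      by (simp add: e_def[abs_def])
  qed
  define e0 where "e0 i = e i 0" for i
  have e0: "\<And>i r. r \<in> J \<Longrightarrow> e i r = e0 i"
  proof -
    fix i r assume r: "r \<in> J"
    obtain C where "\<And>x. x \<in> J \<Longrightarrow> e i x = C"
      using has_field_derivative_zero_constant[OF cJ de] by blast
    then show "e i r = e0 i" using r by (simp add: e0_def J_def)
  qed
  have Vcont: "continuous_on J (\<lambda>s. 1 / V s)"
    by (rule continuous_on_divide[OF continuous_on_const DERIV_continuous_on[OF dV]]) (use Vpos in \<open>auto simp: less_imp_neq[symmetric]\<close>)
  define Z where "Z r = integral {0..r} (\<lambda>s. 1 / V s)" for r
  have dZ: "\<And>r. r \<in> J \<Longrightarrow> (Z has_real_derivative 1 / V r) (at r within J)"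
    unfolding Z_def[abs_def] J_def by (rule integral_has_real_derivative[OF Vcont[unfolded J_def]])
  define T where "T = Z 1"
  have Z0: "Z 0 = 0" by (simp add: Z_def)
  have Zmono: "\<And>x y. 0 \<le> x \<Longrightarrow> x < y \<Longrightarrow> y \<le> 1 \<Longrightarrow> Z x < Z y"
    by (rule incr01[OF dZ[unfolded J_def]]) (use Vpos in auto)
  have Tpos: "T > 0" using Zmono[of 0 1] Z0 by (simp add: T_def)
  have Zrange: "\<And>r. r \<in> J \<Longrightarrow> 0 \<le> Z r \<and> Z r \<le> T"
  proof -
    fix r assume r: "r \<in> J"
    show "0 \<le> Z r \<and> Z r \<le> T"
      using Zmono[of 0 r] Zmono[of r 1] r Z0 by (cases "r = 0"; cases "r = 1") (auto simp: J_def T_def)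
  qed
  have dLV: "\<And>r. r \<in> J \<Longrightarrow> (LV has_real_derivative S r) (at r within J)"
    unfolding LV_def[abs_def] S_def by (rule DERIV_sum) (rule dlog)
  define \<Theta> where "\<Theta> i r = ln (g i r) - LV r / d - e0 i * Z r" for i r
  have d\<Theta>: "\<And>i r. r \<in> J \<Longrightarrow> (\<Theta> i has_real_derivative 0) (at r within J)"
  proof -
    fix i r assume r: "r \<in> J"
    have "((\<lambda>r. ln (g i r) - LV r / d - e0 i * Z r) has_real_derivative 0) (at r within J)"
      by (rule DERIV_cong[OF DERIV_diff[OF DERIV_diff[OF dlog[OF r] DERIV_cdivide[OF dLV[OF r]]] DERIV_cmult[OF dZ[OF r]]]])
         (use e0[OF r, of i] Vpos[of r] in \<open>simp add: e_def field_simps\<close>)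
    then show "(\<Theta> i has_real_derivative 0) (at r within J)" by (simp add: \<Theta>_def[abs_def])
  qed
  have \<Theta>c: "\<And>i r. r \<in> J \<Longrightarrow> \<Theta> i r = \<Theta> i 0"
  proof -
    fix i r assume r: "r \<in> J"
    obtain C where "\<And>x. x \<in> J \<Longrightarrow> \<Theta> i x = C"
      using has_field_derivative_zero_constant[OF cJ d\<Theta>] by blast
    then show "\<Theta> i r = \<Theta> i 0" using r by (simp add: J_def)
  qed
  have LV0: "LV 0 = lnA" and LV1: "LV 1 = lnB" using bd by (simp_all add: LV_def lnA_def lnB_def)
  have eT: "\<And>i. e0 i * T = l i"
  proof -
    fix i
    have "\<Theta> i 1 = \<Theta> i 0" using \<Theta>c[of 1] by (simp add: J_def)
    then have "ln (b i) - lnB / d - e0 i * T = ln (a i) - lnA / d"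
      using bd[of i] LV0 LV1 Z0 by (simp add: \<Theta>_def T_def)
    moreover have hh: "(\<Sum>j\<in>UNIV. L j) = lnB - lnA" by (simp add: L_def lnA_def lnB_def sum_subtractf)
    ultimately show "e0 i * T = l i" unfolding l_def hh L_def by (simp add: diff_divide_distrib)
  qed
  have cons0': "(\<Sum>i\<in>UNIV. - p i 0 * S 0 + (p i 0)^2) = (d - 1) * lam'"
    using cons0 by (simp add: p_def S_def d_def)
  have sump2: "(\<Sum>i\<in>UNIV. (p i 0)^2) = (d - 1) * lam' + (S 0)^2"
  proof -
    have "(\<Sum>i\<in>UNIV. - p i 0 * S 0 + (p i 0)^2) = - S 0 * S 0 + (\<Sum>i\<in>UNIV. (p i 0)^2)"
      by (simp add: sum.distrib S_def sum_distrib_right sum_subtractf)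
    then show ?thesis using cons0' by (simp add: power2_eq_square)
  qed
  have sume2: "(\<Sum>i\<in>UNIV. (e0 i)^2) = (V 0)^2 * ((\<Sum>i\<in>UNIV. (p i 0)^2) - (S 0)^2 / d)"
  proof -
    have "(\<Sum>i\<in>UNIV. (e0 i)^2) = (\<Sum>i\<in>UNIV. (V 0)^2 * (p i 0)^2 - (2 * (V 0)^2 * S 0 / d) * p i 0 + (V 0)^2 * (S 0)^2 / d^2)"
      using d_gt1 by (intro sum.cong) (auto simp: e0_def e_def power2_eq_square field_simps)
    also have "\<dots> = (V 0)^2 * (\<Sum>i\<in>UNIV. (p i 0)^2) - (2 * (V 0)^2 * S 0 / d) * S 0 + d * ((V 0)^2 * (S 0)^2 / d^2)"
      by (simp add: sum.distrib sum_subtractf sum_distrib_left d_def S_def)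
    finally show ?thesis using d_gt1 by (simp add: power2_eq_square field_simps)
  qed
  have E00: "E0 = (V 0)^2 * ((S 0)^2 + \<mu>)" using E0[of 0] by (simp add: E_def J_def)
  have TE: "T^2 * E0 = k^2"
  proof -
    have "(\<Sum>i\<in>UNIV. (l i)^2) = T^2 * (\<Sum>i\<in>UNIV. (e0 i)^2)"
      by (simp add: eT[symmetric] sum_distrib_left power_mult_distrib mult.commute)
    also have "\<dots> = T^2 * ((d - 1) / d * E0)"
      using d_gt1 unfolding sume2 sump2 E00 by (simp add: \<mu>_def field_simps power2_eq_square)
    finally have "(d - 1) * k^2 / d = T^2 * ((d - 1) / d * E0)" by (simp add: sum_l2)
    then have "(d - 1) * (k^2 - T^2 * E0) = 0" using d_gt1 by (simp add: field_simps)
    then show ?thesis using d_gt1 by simp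
  qed
  define bg where "bg = - T * S 0"
  define tg where "tg r = Z r / T" for r
  define W where "W r = 1 / (T * V r)" for r
  have tg0: "tg 0 = 0" and tg1: "tg 1 = 1" using Z0 Tpos by (simp_all add: tg_def T_def)
  have V0: "V 0 = exp lnA" and V1: "V 1 = exp lnB" using LV0 LV1 by (simp_all add: V_def)
  have dtg: "\<And>r. r \<in> J \<Longrightarrow> (tg has_real_derivative 1 / V r / T) (at r within J)"
    unfolding tg_def[abs_def] by (rule DERIV_cdivide[OF dZ])
  have dW: "\<And>r. r \<in> J \<Longrightarrow> (W has_real_derivative - S r * W r) (at r within J)"
  proof -
    fix r assume r: "r \<in> J"
    have nz: "T * V r \<noteq> 0" using Tpos Vpos[of r] by simp
    show "(W has_real_derivative - S r * W r) (at r within J)"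
      unfolding W_def[abs_def]
      by (rule DERIV_cong[OF DERIV_divide[OF DERIV_const DERIV_cmult[OF dV[OF r]] nz]])
         (use nz in \<open>simp add: field_simps power2_eq_square\<close>)
  qed
  have dPg: "\<And>r. r \<in> J \<Longrightarrow> ((\<lambda>r. Psi k al bg (tg r)) has_real_derivative Psi1 k al bg (tg r) * (1 / V r / T)) (at r within J)"
    by (rule DERIV_chain2[OF Psi_deriv dtg])
  have dPg1: "\<And>r. r \<in> J \<Longrightarrow> ((\<lambda>r. Psi1 k al bg (tg r)) has_real_derivative k^2 * Psi k al bg (tg r) * (1 / V r / T)) (at r within J)"
    by (rule DERIV_chain2[OF Psi1_deriv dtg])
  define H where "H r = S r * Psi k al bg (tg r) + Psi1 k al bg (tg r) * W r" for r
  have dH: "\<And>r. r \<in> J \<Longrightarrow> (H has_real_derivative 0) (at r within J)"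
  proof -
    fix r assume r: "r \<in> J"
    have kk: "k^2 = T^2 * (V r)^2 * ((S r)^2 + \<mu>)" using TE E0[OF r] by (simp add: E_def mult.assoc)
    have nz: "T \<noteq> 0" "V r \<noteq> 0" using Tpos Vpos[of r] by auto
    show "(H has_real_derivative 0) (at r within J)"
      unfolding H_def[abs_def]
      by (rule DERIV_cong[OF DERIV_add[OF DERIV_mult[OF dS[OF r] dPg[OF r]] DERIV_mult[OF dPg1[OF r] dW[OF r]]]])
         (use nz in \<open>simp only: kk, simp add: W_def field_simps power2_eq_square\<close>)
  qed
  have H0: "H 0 = 0"
    using V0 Tpos by (simp add: H_def tg0 W_def bg_def al_def exp_minus field_simps)
  have Hz: "\<And>r. r \<in> J \<Longrightarrow> H r = 0"
  proof -
    fix r assume r: "r \<in> J"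
    obtain C where "\<And>x. x \<in> J \<Longrightarrow> H x = C"
      using has_field_derivative_zero_constant[OF cJ dH] by blast
    then show "H r = 0" using r H0 by (metis J_def atLeastAtMost_iff order_refl zero_le_one)
  qed
  define G where "G r = V r * Psi k al bg (tg r)" for r
  have dG: "\<And>r. r \<in> J \<Longrightarrow> (G has_real_derivative 0) (at r within J)"
  proof -
    fix r assume r: "r \<in> J"
    have nz: "T \<noteq> 0" "V r \<noteq> 0" using Tpos Vpos[of r] by auto
    show "(G has_real_derivative 0) (at r within J)"
      unfolding G_def[abs_def]
      by (rule DERIV_cong[OF DERIV_mult[OF dV[OF r] dPg[OF r]]])
         (use nz Hz[OF r] in \<open>simp add: H_def W_def field_simps\<close>)
  qed
  have G0: "G 0 = 1" using V0 by (simp add: G_def tg0 al_def exp_minus)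
  have G1: "\<And>r. r \<in> J \<Longrightarrow> V r * Psi k al bg (tg r) = 1"
  proof -
    fix r assume r: "r \<in> J"
    obtain C where "\<And>x. x \<in> J \<Longrightarrow> G x = C"
      using has_field_derivative_zero_constant[OF cJ dG] by blast
    then show "V r * Psi k al bg (tg r) = 1" using r G0 unfolding G_def
      by (metis J_def atLeastAtMost_iff order_refl zero_le_one)
  qed
  have bgbe: "bg = be"
  proof -
    have "exp lnB * (al * cosh k + bg * Sk k 1) = 1" using G1[of 1] V1 tg1 by (simp add: J_def Psi_def)
    then have "bg * Sk k 1 = exp (- lnB) - cosh k * al" by (simp add: exp_minus field_simps)
    then show ?thesis using Sk1_pos by (simp add: be_def field_simps)
  qed
  have Vps: "\<And>r. r \<in> J \<Longrightarrow> V r * Ps (tg r) = 1" using G1 bgbe by simp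
  have tgJ: "\<And>r. r \<in> J \<Longrightarrow> tg r \<in> {0..1}"
    using Zrange Tpos by (auto simp: tg_def field_simps)
  have dI: "\<And>r. r \<in> J \<Longrightarrow> ((\<lambda>r. I (tg r)) has_real_derivative 1 / T) (at r within J)"
  proof -
    fix r assume r: "r \<in> J"
    have h1: "(tg has_derivative (*) (1 / V r / T)) (at r within J)"
      using dtg[OF r] by (simp add: has_field_derivative_def)
    have "(I has_derivative (*) (1 / Ps (tg r))) (at (tg r) within {0..1})"
      using I_deriv[OF tgJ[OF r]] by (simp add: has_field_derivative_def)
    then have h2: "(I has_derivative (*) (1 / Ps (tg r))) (at (tg r) within tg ` J)"
      by (rule has_derivative_subset) (use tgJ in auto)
    have "((I \<circ> tg) has_derivative ((*) (1 / Ps (tg r)) \<circ> (*) (1 / V r / T))) (at r within J)"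
      by (rule diff_chain_within[OF h1 h2])
    moreover have "((*) (1 / Ps (tg r)) \<circ> (*) (1 / V r / T)) = (*) (1 / T)"
      using Vps[OF r] Vpos[of r] by (auto simp: fun_eq_iff field_simps)
    ultimately show "((\<lambda>r. I (tg r)) has_real_derivative 1 / T) (at r within J)"
      by (simp add: has_field_derivative_def o_def)
  qed
  have dQ: "\<And>r. r \<in> J \<Longrightarrow> ((\<lambda>r. I (tg r) - r / T) has_real_derivative 0) (at r within J)"
    by (rule DERIV_cong[OF DERIV_diff[OF dI DERIV_cdivide[OF DERIV_ident]]]) auto
  have Q: "\<And>r. r \<in> J \<Longrightarrow> I (tg r) = r / T"
  proof -
    fix r assume r: "r \<in> J"
    obtain C where "\<And>x. x \<in> J \<Longrightarrow> I (tg x) - x / T = C"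
      using has_field_derivative_zero_constant[OF cJ dQ] by blast
    then have "I (tg r) - r / T = I (tg 0) - 0 / T" using r by (metis J_def atLeastAtMost_iff order_refl zero_le_one)
    then show "I (tg r) = r / T" by (simp add: tg0)
  qed
  have cT: "c = 1 / T" using Q[of 1] tg1 by (simp add: J_def c_def)
  have tgt: "\<And>r. r \<in> J \<Longrightarrow> tg r = t r"
    using Q tgJ cT by (metis J_def t_unique mult.commute times_divide_eq_right mult_1)
  have lam: "lam' = lam0"
  proof -
    have al0: "al = 1 / V 0" using V0 by (simp add: al_def exp_minus inverse_eq_divide)
    have "- be * c = S 0 * (T * c)" using bgbe[symmetric] by (simp add: bg_def)
    moreover have "T * c = 1" using Tpos cT by simp
    ultimately have S0: "S 0 = - be * c" by simp
    have "c^2 * (k^2 * al^2 - be^2) = \<mu>"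
      by (rule alg1[OF cT Tpos Vpos[of 0] al0 S0 E00 TE])
    then show ?thesis using d_gt1 by (simp add: lam0_def \<mu>_def)
  qed
  have gf: "\<And>i r. r \<in> J \<Longrightarrow> g i r = fs i r"
  proof -
    fix i r assume r: "r \<in> J"
    have "\<Theta> i r = \<Theta> i 0" by (rule \<Theta>c[OF r])
    moreover have "LV r = - ln (Ps (t r))"
    proof -
      have h: "V r * Ps (t r) = 1" using Vps[OF r] tgt[OF r] by simp
      then have "Ps (t r) \<noteq> 0" by auto
      then have "V r = 1 / Ps (t r)" using h by (simp add: field_simps)
      then have "LV r = ln (1 / Ps (t r))" by (metis V_def ln_exp)
      then show ?thesis using Psi_pos t_prop r by (simp add: J_def ln_div)
    qed
    moreover have "e0 i * Z r = l i * t r"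
      using eT[of i] tgt[OF r] Tpos by (simp add: tg_def field_simps)
    ultimately have "ln (g i r) = ln (a i) + (l i * t r - (lnA + ln (Ps (t r))) / d)"
      using bd[of i] LV0 Z0 by (simp add: \<Theta>_def diff_divide_distrib add_divide_distrib)
    then have "g i r = exp (ln (a i) + (l i * t r - (lnA + ln (Ps (t r))) / d))"
      using gpos[of r i] r by (metis exp_ln)
    then show "g i r = fs i r" using apos[of i] by (simp add: fs_def F_def exp_add)
  qed
  show ?thesis using lam gf by (simp add: J_def)
qed

lemma main: "\<exists>lam f. einstein_sol a b lam f \<and>
           (\<forall>lam' g. einstein_sol a b lam' g \<longrightarrow>
              lam' = lam \<and> (\<forall>i. \<forall>r\<in>{0..1}. g i r = f i r))"
  using existence uniqueness by blast
end

theorem theorem3p1: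
  fixes a b :: "'n::finite \<Rightarrow> real"
  assumes "CARD('n) \<ge> 2"
    and "\<forall>i. a i > 0" and "\<forall>i. b i > 0"
  shows "\<exists>lam f. einstein_sol a b lam f \<and>
           (\<forall>lam' g. einstein_sol a b lam' g \<longrightarrow>
              lam' = lam \<and> (\<forall>i. \<forall>r\<in>{0..1}. g i r = f i r))"
proof -
  interpret data a b by unfold_locales (use assms in auto)
  show ?thesis by (rule main)
qed

end
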